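(* Let $\varepsilon\in\{-1,1\}$, let $M(\phi,\xi,\eta,g_M)$ be a Lorentzian almost (para)contact manifold of dimension $2m+1$, let $(N,g_N)$ be a semi-Riemannian manifold of dimension $n$, and let $F:M\to N$ be an anti-invariant semi-Riemannian submersion such that $\phi(\ker F_* )=(\ker F_* )^\perp$. Then $\xi$ is vertical and $m=n$. Moreover, $N$ is a Riemannian manifold.
   Context: A Lorentzian almost contact ($\varepsilon=-1$), resp. almost paracontact ($\varepsilon=1$), manifold is a $(2m+1)$-dimensional manifold $M$ with Lorentzian metric $g_M$, $(1,1)$-tensor $\phi$, vector field $\xi$ and $1$-form $\eta$ with $\phi^2X=\varepsilon X+\eta(X)\xi$, $g_M(\phi X,\phi Y)=g_M(X,Y)+\eta(X)\eta(Y)$, $\eta(X)=\varepsilon g_M(X,\xi)$, $\eta(\xi)=-\varepsilon$. A semi-Riemannian submersion $F:M\to N$ is a submersion with nondegenerate fibres such that $F_*$ is an isometry from $(\ker F_* )^\perp$ onto $TN$; it is anti-invariant if $\phi(\ker F_* )\subseteq(\ker F_* )^\perp$. $\xi$ vertical means $\xi$ takes values in $\ker F_*$. A Riemannian manifold has positive definite metric. *)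

theory Defs
  imports "HOL-Analysis.Analysis"
begin

text \<open>Pointwise (tangent-space) model. Each tangent space of M is identified with the
finite-dimensional real vector space 'v, each tangent space of N with 'w.\<close>

definition sym_bilinear :: "('a::real_vector \<Rightarrow> 'a \<Rightarrow> real) \<Rightarrow> bool" where
  "sym_bilinear B \<longleftrightarrow> bilinear B \<and> (\<forall>x y. B x y = B y x)"

definition nondegenerate_on :: "('a::real_vector \<Rightarrow> 'a \<Rightarrow> real) \<Rightarrow> 'a set \<Rightarrow> bool" where
  "nondegenerate_on B S \<longleftrightarrow> (\<forall>x\<in>S. (\<forall>y\<in>S. B x y = 0) \<longrightarrow> x = 0)"

definition semi_riem_form :: "('a::real_vector \<Rightarrow> 'a \<Rightarrow> real) \<Rightarrow> bool" where
  "semi_riem_form B \<longleftrightarrow> sym_bilinear B \<and> nondegenerate_on B UNIV"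

definition form_index :: "('a::euclidean_space \<Rightarrow> 'a \<Rightarrow> real) \<Rightarrow> nat" where
  "form_index B = Max {dim S | S. subspace S \<and> (\<forall>x\<in>S. x \<noteq> 0 \<longrightarrow> B x x < 0)}"

definition lorentzian_form :: "('a::euclidean_space \<Rightarrow> 'a \<Rightarrow> real) \<Rightarrow> bool" where
  "lorentzian_form B \<longleftrightarrow> semi_riem_form B \<and> form_index B = 1"

definition riemannian_form :: "('a::real_vector \<Rightarrow> 'a \<Rightarrow> real) \<Rightarrow> bool" where
  "riemannian_form B \<longleftrightarrow> sym_bilinear B \<and> (\<forall>x. x \<noteq> 0 \<longrightarrow> B x x > 0)"

text \<open>Lorentzian almost contact (\<epsilon> = -1) / almost paracontact (\<epsilon> = 1) structure on one
tangent space.\<close>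
definition lorentzian_apc_structure ::
  "real \<Rightarrow> ('a::euclidean_space \<Rightarrow> 'a \<Rightarrow> real) \<Rightarrow> ('a \<Rightarrow> 'a) \<Rightarrow> 'a \<Rightarrow> ('a \<Rightarrow> real) \<Rightarrow> bool" where
  "lorentzian_apc_structure \<epsilon> g \<phi> \<xi> \<eta> \<longleftrightarrow>
     lorentzian_form g \<and> linear \<phi> \<and> linear \<eta> \<and>
     (\<forall>X. \<phi> (\<phi> X) = \<epsilon> *\<^sub>R X + \<eta> X *\<^sub>R \<xi>) \<and>
     (\<forall>X Y. g (\<phi> X) (\<phi> Y) = g X Y + \<eta> X * \<eta> Y) \<and>
     (\<forall>X. \<eta> X = \<epsilon> * g X \<xi>) \<and>
     \<eta> \<xi> = - \<epsilon>"

definition vert_space :: "('a::real_vector \<Rightarrow> 'b::real_vector) \<Rightarrow> 'a set" where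
  "vert_space dF = {v. dF v = 0}"

definition horiz_space :: "('a::real_vector \<Rightarrow> 'a \<Rightarrow> real) \<Rightarrow> ('a \<Rightarrow> 'b::real_vector) \<Rightarrow> 'a set" where
  "horiz_space g dF = {x. \<forall>y\<in>vert_space dF. g x y = 0}"

definition semi_riem_submersion_at ::
  "('a::real_vector \<Rightarrow> 'a \<Rightarrow> real) \<Rightarrow> ('b::real_vector \<Rightarrow> 'b \<Rightarrow> real) \<Rightarrow> ('a \<Rightarrow> 'b) \<Rightarrow> bool" where
  "semi_riem_submersion_at g h dF \<longleftrightarrow>
     linear dF \<and> surj dF \<and>
     nondegenerate_on g (vert_space dF) \<and>
     bij_betw dF (horiz_space g dF) UNIV \<and>
     (\<forall>x\<in>horiz_space g dF. \<forall>y\<in>horiz_space g dF. h (dF x) (dF y) = g x y)"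

end

theory Submission
  imports Defs
begin

lemma pointwise:
  fixes g :: "'v::euclidean_space \<Rightarrow> 'v \<Rightarrow> real" and h :: "'w::euclidean_space \<Rightarrow> 'w \<Rightarrow> real"
    and dF :: "'v \<Rightarrow> 'w" and \<phi> :: "'v \<Rightarrow> 'v" and \<xi> :: 'v and \<eta> :: "'v \<Rightarrow> real"
  assumes eps: "\<epsilon> \<in> {-1, 1}" and st: "lorentzian_apc_structure \<epsilon> g \<phi> \<xi> \<eta>"
    and sm: "semi_riem_submersion_at g h dF" and pe: "\<phi> ` vert_space dF = horiz_space g dF"
  shows "\<xi> \<in> vert_space dF \<and> 2 * DIM('w) + 1 = DIM('v) \<and> (\<forall>w. w \<noteq> 0 \<longrightarrow> h w w > 0)"
proof -
  define V where "V = vert_space dF"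
  define H where "H = horiz_space g dF"
  have lf: "linear \<phi>" and le: "linear \<eta>"
    and phi2: "\<And>X. \<phi> (\<phi> X) = \<epsilon> *\<^sub>R X + \<eta> X *\<^sub>R \<xi>"
    and etag: "\<And>X. \<eta> X = \<epsilon> * g X \<xi>" and etaxi: "\<eta> \<xi> = - \<epsilon>"
    and lor: "lorentzian_form g"
    using st unfolding lorentzian_apc_structure_def by auto
  have bl: "bilinear g" and symg: "\<And>x y. g x y = g y x" and nd: "nondegenerate_on g UNIV"
    and idx: "form_index g = 1"
    using lor unfolding lorentzian_form_def semi_riem_form_def sym_bilinear_def by auto
  have ldF: "linear dF" and ndV: "nondegenerate_on g V" and bij: "bij_betw dF H UNIV"
    and iso: "\<forall>x\<in>H. \<forall>y\<in>H. h (dF x) (dF y) = g x y"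
    using sm unfolding semi_riem_submersion_at_def V_def H_def by auto
  have e2: "\<epsilon> * \<epsilon> = 1" and en: "\<epsilon> \<noteq> 0" using eps by auto
  have gxx: "g \<xi> \<xi> = -1"
  proof -
    have "\<epsilon> * g \<xi> \<xi> = - \<epsilon>" using etag[of \<xi>] etaxi by simp
    then show ?thesis using en by (metis mult_minus1_right mult_left_cancel)
  qed
  have g0: "\<And>x. g 0 x = 0" "\<And>x. g x 0 = 0" using bl by (auto simp: bilinear_lzero bilinear_rzero)
  have xin0: "\<xi> \<noteq> 0" using gxx g0 by auto
  have ker: "\<And>x. \<phi> x = 0 \<Longrightarrow> x = (- \<eta> x / \<epsilon>) *\<^sub>R \<xi>"
  proof -
    fix x assume "\<phi> x = 0"
    then have "\<epsilon> *\<^sub>R x + \<eta> x *\<^sub>R \<xi> = 0" using phi2[of x] lf linear_0 by metis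
    then have "\<epsilon> *\<^sub>R x = (- \<eta> x) *\<^sub>R \<xi>" by (simp add: add_eq_0_iff)
    then have "(1/\<epsilon>) *\<^sub>R (\<epsilon> *\<^sub>R x) = (1/\<epsilon>) *\<^sub>R ((- \<eta> x) *\<^sub>R \<xi>)" by simp
    then show "x = (- \<eta> x / \<epsilon>) *\<^sub>R \<xi>" using en by simp
  qed
  have phixi: "\<phi> \<xi> = 0"
  proof -
    have "\<phi> (\<phi> \<xi>) = 0" using phi2[of \<xi>] etaxi by simp
    then obtain c where c: "\<phi> \<xi> = c *\<^sub>R \<xi>" using ker by blast
    then have "\<phi> (\<phi> \<xi>) = c *\<^sub>R (c *\<^sub>R \<xi>)" using lf by (simp add: linear_scale)
    with \<open>\<phi> (\<phi> \<xi>) = 0\<close> xin0 have "c = 0" by simp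
    with c show ?thesis by simp
  qed
  have etaphi: "\<And>x. \<eta> (\<phi> x) = 0"
  proof -
    fix x
    have "\<phi> (\<phi> (\<phi> x)) = \<epsilon> *\<^sub>R \<phi> x + \<eta> (\<phi> x) *\<^sub>R \<xi>" by (rule phi2)
    moreover have "\<phi> (\<phi> (\<phi> x)) = \<epsilon> *\<^sub>R \<phi> x" using phi2[of x] lf phixi
      by (simp add: linear_add linear_scale)
    ultimately have "\<eta> (\<phi> x) *\<^sub>R \<xi> = 0" by simp
    then show "\<eta> (\<phi> x) = 0" using xin0 by simp
  qed
  have gphi: "\<And>x. g (\<phi> x) \<xi> = 0" using etaphi etag en by (metis mult_eq_0_iff)
  have subV: "subspace V" unfolding V_def vert_space_def using ldF
    by (simp add: linear_subspace_kernel)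
  have subH: "subspace H" unfolding H_def horiz_space_def subspace_def
    using bl g0 by (auto simp: bilinear_ladd bilinear_lmul)
  have dec: "\<And>x. \<exists>v\<in>V. \<exists>k\<in>H. x = v + k"
  proof -
    fix x
    have "dF x \<in> dF ` H" using bij unfolding bij_betw_def by auto
    then obtain k where k: "k \<in> H" "dF k = dF x" by auto
    then have "x - k \<in> V" unfolding V_def vert_space_def using ldF by (simp add: linear_diff)
    then show "\<exists>v\<in>V. \<exists>k\<in>H. x = v + k" using k by (metis diff_add_cancel)
  qed
  have VH: "V \<inter> H = {0}"
  proof -
    have "x = 0" if "x \<in> V" "x \<in> H" for x
      using ndV that unfolding nondegenerate_on_def H_def horiz_space_def V_def by auto
    then show ?thesis using subV subH by (auto simp: subspace_0)
  qed
  have gHV: "\<And>k v. k \<in> H \<Longrightarrow> v \<in> V \<Longrightarrow> g k v = 0"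
    unfolding H_def V_def horiz_space_def by auto
  have perpall: "\<And>k. (\<forall>y\<in>H. g k y = 0) \<Longrightarrow> (\<forall>y\<in>V. g k y = 0) \<Longrightarrow> k = 0"
  proof -
    fix k assume a: "\<forall>y\<in>H. g k y = 0" "\<forall>y\<in>V. g k y = 0"
    have "\<forall>z. g k z = 0"
    proof
      fix z
      obtain v k' where "v \<in> V" "k' \<in> H" "z = v + k'" using dec by blast
      then show "g k z = 0" using a bl by (simp add: bilinear_radd)
    qed
    then show "k = 0" using nd unfolding nondegenerate_on_def by auto
  qed
  have xiV: "\<xi> \<in> V"
  proof -
    obtain v k where vk: "v \<in> V" "k \<in> H" "\<xi> = v + k" using dec by blast
    have "\<forall>y\<in>H. g k y = 0"
    proof
      fix y assume "y \<in> H"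
      then obtain u where "y = \<phi> u" using pe unfolding V_def H_def by auto
      then have "g \<xi> y = 0" using gphi symg by metis
      moreover have "g v y = 0" using gHV[OF \<open>y \<in> H\<close> vk(1)] symg by metis
      ultimately show "g k y = 0" using vk bl by (simp add: bilinear_ladd)
    qed
    moreover have "\<forall>y\<in>V. g k y = 0" using gHV vk by auto
    ultimately have "k = 0" using perpall by auto
    then show ?thesis using vk by simp
  qed
  have sumUNIV: "{x + y |x y. x \<in> V \<and> y \<in> H} = UNIV" using dec by blast
  have dim0: "dim {0::'v} = 0" by (simp add: dim_insert)
  have dVH: "dim V + dim H = DIM('v)"
    using dim_sums_Int[OF subV subH] sumUNIV VH dim0 by simp
  have dH: "dim H = DIM('w)"
  proof -
    have sp: "span H = H" using subH by (simp add: span_eq_iff)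
    have "inj_on dF (span H)" using bij unfolding bij_betw_def sp by simp
    then have "dim (dF ` H) = dim H" using dim_image_eq[OF ldF] by blast
    moreover have "dF ` H = UNIV" using bij unfolding bij_betw_def by simp
    ultimately show ?thesis by simp
  qed
  define W where "W = V \<inter> {x. g x \<xi> = 0}"
  have subW: "subspace W" unfolding W_def
    using subV bl g0 by (auto simp: subspace_def bilinear_ladd bilinear_lmul)
  have subX: "subspace (span {\<xi>})" by simp
  have WX: "W \<inter> span {\<xi>} = {0}"
  proof -
    have "y = 0" if yy: "y \<in> W" "y \<in> span {\<xi>}" for y
    proof -
      obtain c where c: "y = c *\<^sub>R \<xi>" using yy(2) by (auto simp: span_singleton)
      then have "g y \<xi> = - c" using bl gxx by (simp add: bilinear_lmul)
      moreover have "g y \<xi> = 0" using yy(1) unfolding W_def by auto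
      ultimately show ?thesis using c by simp
    qed
    then show ?thesis using subW subX by (auto simp: subspace_0)
  qed
  have WXV: "{x + y |x y. x \<in> W \<and> y \<in> span {\<xi>}} = V"
  proof
    show "{x + y |x y. x \<in> W \<and> y \<in> span {\<xi>}} \<subseteq> V"
    proof clarify
      fix x y assume "x \<in> W" "y \<in> span {\<xi>}"
      then have "x \<in> V" "y \<in> V" using xiV subV unfolding W_def
        by (auto simp: span_singleton subspace_mul)
      then show "x + y \<in> V" using subV by (simp add: subspace_add)
    qed
    show "V \<subseteq> {x + y |x y. x \<in> W \<and> y \<in> span {\<xi>}}"
    proof
      fix v assume v: "v \<in> V"
      define c where "c = - g v \<xi>"
      have "v - c *\<^sub>R \<xi> \<in> V" using v xiV subV by (simp add: subspace_diff subspace_mul)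
      moreover have "g (v - c *\<^sub>R \<xi>) \<xi> = 0" using bl gxx
        by (simp add: bilinear_lsub bilinear_ladd bilinear_lmul c_def)
      ultimately have "v - c *\<^sub>R \<xi> \<in> W" unfolding W_def by simp
      moreover have "c *\<^sub>R \<xi> \<in> span {\<xi>}" by (simp add: span_mul span_base)
      ultimately show "v \<in> {x + y |x y. x \<in> W \<and> y \<in> span {\<xi>}}"
        by (metis (mono_tags, lifting) diff_add_cancel mem_Collect_eq)
    qed
  qed
  have dX: "dim (span {\<xi>}) = 1" using xin0 by (simp add: dim_insert)
  have dVW: "dim V = dim W + 1"
    using dim_sums_Int[OF subW subX] WX WXV dim0 dX by simp
  have phiW: "\<phi> ` W = H"
  proof
    show "\<phi> ` W \<subseteq> H" using pe unfolding W_def V_def H_def by auto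
    show "H \<subseteq> \<phi> ` W"
    proof
      fix y assume "y \<in> H"
      then obtain v where v: "v \<in> V" "y = \<phi> v" using pe unfolding V_def H_def by auto
      then obtain w z where wz: "w \<in> W" "z \<in> span {\<xi>}" "v = w + z" using WXV by blast
      then obtain c where "z = c *\<^sub>R \<xi>" by (auto simp: span_singleton)
      then have "\<phi> v = \<phi> w" using wz lf phixi by (simp add: linear_add linear_scale)
      then show "y \<in> \<phi> ` W" using v wz by auto
    qed
  qed
  have injW: "inj_on \<phi> (span W)"
  proof -
    have "\<forall>x\<in>W. \<phi> x = 0 \<longrightarrow> x = 0"
    proof clarify
      fix x assume x: "x \<in> W" "\<phi> x = 0"
      then have "x \<in> span {\<xi>}" using ker[of x] by (metis span_base span_mul singletonI)
      then show "x = 0" using WX x by auto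
    qed
    moreover have spW: "span W = W" using subW by (simp add: span_eq_iff)
    ultimately show ?thesis using subW lf unfolding spW by (simp add: linear_inj_on_iff_eq_0)
  qed
  have dWH: "dim W = dim H" using dim_image_eq[OF lf injW] phiW by simp
  have dims: "2 * DIM('w) + 1 = DIM('v)" using dVH dH dVW dWH by simp
  have stepA: "\<And>y. g y \<xi> = 0 \<Longrightarrow> y \<noteq> 0 \<Longrightarrow> g y y \<ge> 0"
  proof (rule ccontr)
    fix y assume y: "g y \<xi> = 0" "y \<noteq> 0" "\<not> g y y \<ge> 0"
    define S where "S = span {\<xi>, y}"
    have subS: "subspace S" unfolding S_def by simp
    have notin: "\<xi> \<notin> span {y}"
    proof
      assume "\<xi> \<in> span {y}"
      then obtain c where "\<xi> = c *\<^sub>R y" by (auto simp: span_singleton)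
      then have "g \<xi> \<xi> = c * g y \<xi>" using bl by (simp add: bilinear_lmul)
      then show False using y gxx by simp
    qed
    have "dim {y} = 1" using y by (simp add: dim_insert)
    then have dS: "dim S = 2" unfolding S_def using notin by (simp add: dim_insert)
    have negS: "\<forall>x\<in>S. x \<noteq> 0 \<longrightarrow> g x x < 0"
    proof clarify
      fix x assume x: "x \<in> S" "x \<noteq> 0"
      have "x \<in> span (insert \<xi> {y})" using x(1) unfolding S_def by simp
      then obtain a where "x - a *\<^sub>R \<xi> \<in> span {y}" unfolding span_insert[of \<xi> "{y}"] by blast
      then obtain b where "x - a *\<^sub>R \<xi> = b *\<^sub>R y" unfolding span_singleton by blast
      then have ab: "x = a *\<^sub>R \<xi> + b *\<^sub>R y" by (simp add: algebra_simps)
      have gxx': "g x x = a * a * g \<xi> \<xi> + b * b * g y y"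
        using bl symg y(1) unfolding ab
        by (simp add: bilinear_ladd bilinear_radd bilinear_lmul bilinear_rmul algebra_simps)
      have "a \<noteq> 0 \<or> b \<noteq> 0" using x ab by auto
      have "b * b * g y y \<le> 0" using y(3) by (simp add: mult_nonneg_nonpos)
      moreover have "a * a \<ge> 0" by simp
      moreover have "a \<noteq> 0 \<Longrightarrow> a * a > 0" by (auto simp: zero_less_mult_iff linorder_neq_iff)
      moreover have "b \<noteq> 0 \<Longrightarrow> b * b * g y y < 0" using y(3) by (auto simp: mult_pos_neg zero_less_mult_iff linorder_neq_iff)
      ultimately show "g x x < 0" using gxx' gxx \<open>a \<noteq> 0 \<or> b \<noteq> 0\<close> by fastforce
    qed
    define A where "A = {dim S | S. subspace S \<and> (\<forall>x\<in>S. x \<noteq> 0 \<longrightarrow> g x x < 0)}"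
    have "2 \<in> A" unfolding A_def using subS negS dS by force
    moreover have "finite A"
    proof -
      have "A \<subseteq> {..DIM('v)}" unfolding A_def using dim_subset_UNIV by fastforce
      then show ?thesis using finite_subset by blast
    qed
    ultimately have "2 \<le> Max A" by simp
    then show False using idx unfolding form_index_def A_def by simp
  qed
  have posH: "\<And>x. x \<in> H \<Longrightarrow> x \<noteq> 0 \<Longrightarrow> g x x > 0"
  proof (rule ccontr)
    fix x assume x: "x \<in> H" "x \<noteq> 0" "\<not> g x x > 0"
    have xx: "g x \<xi> = 0" using gHV[OF x(1) xiV] .
    then have "g x x = 0" using stepA x by force
    have "\<exists>y\<in>H. g x y \<noteq> 0"
    proof (rule ccontr)
      assume "\<not> (\<exists>y\<in>H. g x y \<noteq> 0)"
      then have "x = 0" using perpall gHV[OF x(1)] by auto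
      with x show False by simp
    qed
    then obtain y where y: "y \<in> H" "g x y \<noteq> 0" by blast
    define c where "c = g x y"
    define d where "d = g y y"
    define t where "t = - c / (\<bar>d\<bar> + 1)"
    define z where "z = x + t *\<^sub>R y"
    have zH: "z \<in> H" unfolding z_def using subH x y by (simp add: subspace_add subspace_mul)
    have zx: "g z \<xi> = 0" using gHV[OF zH xiV] .
    have gz: "g z z = 2 * t * c + t * t * d"
      using bl symg \<open>g x x = 0\<close> unfolding z_def c_def d_def
      by (simp add: bilinear_ladd bilinear_radd bilinear_lmul bilinear_rmul algebra_simps)
    have neg: "2 * t * c + t * t * d < 0"
    proof -
      define k where "k = 1 / (\<bar>d\<bar> + 1)"
      have kpos: "k > 0" unfolding k_def by simp
      have kd: "k * \<bar>d\<bar> < 1" unfolding k_def by (simp add: field_simps)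
      have tt: "t = - c * k" unfolding t_def k_def by simp
      have cc: "c * c > 0" using y c_def by (auto simp: zero_less_mult_iff linorder_neq_iff)
      have "2 * t * c + t * t * d = c * c * k * (k * d - 2)" unfolding tt by (simp add: algebra_simps)
      moreover have "k * d - 2 < 0"
      proof -
        have "k * d \<le> k * \<bar>d\<bar>" using kpos by (intro mult_left_mono) auto
        then show ?thesis using kd by linarith
      qed
      ultimately show ?thesis using cc kpos by (simp add: mult_pos_neg)
    qed
    have "z \<noteq> 0" using gz neg g0 by auto
    then show False using stepA[OF zx] gz neg by simp
  qed
  have "\<forall>w. w \<noteq> 0 \<longrightarrow> h w w > 0"
  proof clarify
    fix w :: 'w assume w: "w \<noteq> 0"
    obtain x where x: "x \<in> H" "dF x = w" using bij unfolding bij_betw_def by (metis UNIV_I imageE)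
    have "x \<noteq> 0" using x w ldF linear_0 by metis
    then show "h w w > 0" using posH x iso by auto
  qed
  then show ?thesis using xiV dims unfolding V_def by simp
qed

theorem mainTheorem13:
  fixes \<epsilon> :: real and m n :: nat
    and M :: "'p set" and N :: "'q set" and F :: "'p \<Rightarrow> 'q"
    and dF :: "'p \<Rightarrow> 'v::euclidean_space \<Rightarrow> 'w::euclidean_space"
    and gM :: "'p \<Rightarrow> 'v \<Rightarrow> 'v \<Rightarrow> real" and gN :: "'q \<Rightarrow> 'w \<Rightarrow> 'w \<Rightarrow> real"
    and \<phi> :: "'p \<Rightarrow> 'v \<Rightarrow> 'v" and \<xi> :: "'p \<Rightarrow> 'v" and \<eta> :: "'p \<Rightarrow> 'v \<Rightarrow> real"
  assumes eps: "\<epsilon> \<in> {-1, 1}"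
    and dimM: "DIM('v) = 2 * m + 1"
    and dimN: "DIM('w) = n"
    and M_ne: "M \<noteq> {}"
    and structM: "\<forall>p\<in>M. lorentzian_apc_structure \<epsilon> (gM p) (\<phi> p) (\<xi> p) (\<eta> p)"
    and metricN: "\<forall>q\<in>N. semi_riem_form (gN q)"
    and F_onto: "F ` M = N"
    and subm: "\<forall>p\<in>M. semi_riem_submersion_at (gM p) (gN (F p)) (dF p)"
    and anti_inv: "\<forall>p\<in>M. \<phi> p ` vert_space (dF p) \<subseteq> horiz_space (gM p) (dF p)"
    and phi_eq: "\<forall>p\<in>M. \<phi> p ` vert_space (dF p) = horiz_space (gM p) (dF p)"
  shows "(\<forall>p\<in>M. \<xi> p \<in> vert_space (dF p)) \<and> m = n \<and> (\<forall>q\<in>N. riemannian_form (gN q))"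
proof -
  have P: "\<And>p. p \<in> M \<Longrightarrow> \<xi> p \<in> vert_space (dF p) \<and> 2 * DIM('w) + 1 = DIM('v)
      \<and> (\<forall>w. w \<noteq> 0 \<longrightarrow> gN (F p) w w > 0)"
    using pointwise[OF eps] structM subm phi_eq by blast
  obtain p0 where "p0 \<in> M" using M_ne by blast
  then have "m = n" using P dimM dimN by force
  moreover have "\<forall>q\<in>N. riemannian_form (gN q)"
  proof
    fix q assume "q \<in> N"
    then obtain p where p: "p \<in> M" "q = F p" using F_onto by blast
    show "riemannian_form (gN q)" using P[OF p(1)] metricN \<open>q \<in> N\<close> p(2)
      unfolding riemannian_form_def semi_riem_form_def by auto
  qed
  ultimately show ?thesis using P by blast
qed

end
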